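(* Let $\delta>0$ with $1/\delta\in\mathbb N$ and $\epsilon_{\mathrm{large}}>0$. Let $I_C$ be a set of items packed (stacked one on top of the other) inside a horizontal container $C\subseteq K=[0,N]^2$, each of placed width greater than $\epsilon_{\mathrm{large}}N$. Then there exist a set $I'_C\subseteq I_C$ with $|I'_C|\ge|I_C|-g(\delta,\epsilon_{\mathrm{large}})$, where $g$ depends only on $\delta$ and $\epsilon_{\mathrm{large}}$, and pairwise disjoint horizontal containers $C_1,\dots,C_{1/\delta}$, all lying inside $C$, which together pack all items of $I'_C$ (stacked inside each container), such that the total area inside $\bigcup_{j=1}^{1/\delta}C_j$ not occupied by any item is at most $\delta\cdot a(C)$, where $a(C)=w(C)h(C)$. (Symmetrically for vertical containers with items of placed height greater than $\epsilon_{\mathrm{large}}N$.)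
   Context: A container is an open axis-parallel rectangle $C\subseteq K$ with integer corner coordinates, labelled horizontal, vertical, or area; $w(C),h(C)$ denote its width and height. Items inside a horizontal container are stacked one on top of the other (their vertical projections are pairwise disjoint); items inside a vertical container are placed one next to the other (their horizontal projections are pairwise disjoint). *)

theory Defs
  imports Complex_Main
begin

text \<open>A rectangle is given by its integer corners (x1, y1, x2, y2); it denotes the
  open set (x1,x2) x (y1,y2) in the plane.\<close>
type_synonym rect = "int \<times> int \<times> int \<times> int"

definition rect_set :: "rect \<Rightarrow> (real \<times> real) set" where
  "rect_set r = (case r of (x1, y1, x2, y2) \<Rightarrow>
     {(x, y). real_of_int x1 < x \<and> x < real_of_int x2 \<and> real_of_int y1 < y \<and> y < real_of_int y2})"

definition valid_rect :: "rect \<Rightarrow> bool" where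
  "valid_rect r = (case r of (x1, y1, x2, y2) \<Rightarrow> x1 \<le> x2 \<and> y1 \<le> y2)"

definition rect_w :: "rect \<Rightarrow> int" where
  "rect_w r = (case r of (x1, y1, x2, y2) \<Rightarrow> x2 - x1)"

definition rect_h :: "rect \<Rightarrow> int" where
  "rect_h r = (case r of (x1, y1, x2, y2) \<Rightarrow> y2 - y1)"

definition rect_area :: "rect \<Rightarrow> int" where
  "rect_area r = rect_w r * rect_h r"

definition knapsack :: "nat \<Rightarrow> (real \<times> real) set" where
  "knapsack N = {0..real N} \<times> {0..real N}"

definition item_rect :: "(nat \<Rightarrow> nat) \<Rightarrow> (nat \<Rightarrow> nat) \<Rightarrow> (nat \<Rightarrow> int \<times> int) \<Rightarrow> nat \<Rightarrow> rect" where
  "item_rect wd ht p i = (fst (p i), snd (p i), fst (p i) + int (wd i), snd (p i) + int (ht i))"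

datatype ckind = Horizontal | Vertical

definition stack_proj :: "ckind \<Rightarrow> (nat \<Rightarrow> nat) \<Rightarrow> (nat \<Rightarrow> nat) \<Rightarrow> (nat \<Rightarrow> int \<times> int) \<Rightarrow> nat \<Rightarrow> real set" where
  "stack_proj k wd ht p i = (case k of
      Horizontal \<Rightarrow> {real_of_int (snd (p i)) <..< real_of_int (snd (p i)) + real (ht i)}
    | Vertical \<Rightarrow> {real_of_int (fst (p i)) <..< real_of_int (fst (p i)) + real (wd i)})"

definition packed_in :: "ckind \<Rightarrow> rect \<Rightarrow> (nat \<Rightarrow> nat) \<Rightarrow> (nat \<Rightarrow> nat) \<Rightarrow> (nat \<Rightarrow> int \<times> int) \<Rightarrow> nat set \<Rightarrow> bool" where
  "packed_in k C wd ht p I \<longleftrightarrow>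
     (\<forall>i\<in>I. rect_set (item_rect wd ht p i) \<subseteq> rect_set C) \<and>
     (\<forall>i\<in>I. \<forall>j\<in>I. i \<noteq> j \<longrightarrow> stack_proj k wd ht p i \<inter> stack_proj k wd ht p j = {})"

definition long_side :: "ckind \<Rightarrow> (nat \<Rightarrow> nat) \<Rightarrow> (nat \<Rightarrow> nat) \<Rightarrow> nat \<Rightarrow> nat" where
  "long_side k wd ht i = (case k of Horizontal \<Rightarrow> wd i | Vertical \<Rightarrow> ht i)"

end

theory Submission
  imports Defs
begin

lemma rect_sub:
  assumes "a' \<le> a" "b \<le> b'" "c' \<le> c" "d \<le> d'"
  shows "rect_set (a,c,b,d) \<subseteq> rect_set (a',c',b',d')"
  using assms unfolding rect_set_def by auto

lemma rect_sub_inv: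
  assumes "x1 < x2" "y1 < y2" "rect_set (x1,y1,x2,y2) \<subseteq> rect_set (a1,b1,a2,b2)"
  shows "a1 \<le> x1 \<and> x2 \<le> a2 \<and> b1 \<le> y1 \<and> y2 \<le> b2"
proof -
  have hx: "real_of_int x1 < real_of_int x1 + 1/2" "real_of_int x1 + 1/2 < real_of_int x2"
           "real_of_int x1 < real_of_int x2 - 1/2" "real_of_int x2 - 1/2 < real_of_int x2"
  proof -
    have "x1 + 1 \<le> x2" using assms(1) by linarith
    then have "real_of_int x1 + 1 \<le> real_of_int x2" by (metis of_int_1 of_int_add of_int_le_iff)
    then show "real_of_int x1 < real_of_int x1 + 1/2" "real_of_int x1 + 1/2 < real_of_int x2"
           "real_of_int x1 < real_of_int x2 - 1/2" "real_of_int x2 - 1/2 < real_of_int x2" by linarith+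
  qed
  have hy: "real_of_int y1 < real_of_int y1 + 1/2" "real_of_int y1 + 1/2 < real_of_int y2"
           "real_of_int y1 < real_of_int y2 - 1/2" "real_of_int y2 - 1/2 < real_of_int y2"
  proof -
    have "y1 + 1 \<le> y2" using assms(2) by linarith
    then have "real_of_int y1 + 1 \<le> real_of_int y2" by (metis of_int_1 of_int_add of_int_le_iff)
    then show "real_of_int y1 < real_of_int y1 + 1/2" "real_of_int y1 + 1/2 < real_of_int y2"
           "real_of_int y1 < real_of_int y2 - 1/2" "real_of_int y2 - 1/2 < real_of_int y2" by linarith+
  qed
  have "(real_of_int x1 + 1/2, real_of_int y1 + 1/2) \<in> rect_set (x1,y1,x2,y2)"
    using hx hy unfolding rect_set_def by simp
  then have p1: "(real_of_int x1 + 1/2, real_of_int y1 + 1/2) \<in> rect_set (a1,b1,a2,b2)" using assms(3) by blast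
  have "(real_of_int x2 - 1/2, real_of_int y2 - 1/2) \<in> rect_set (x1,y1,x2,y2)"
    using hx hy unfolding rect_set_def by simp
  then have p2: "(real_of_int x2 - 1/2, real_of_int y2 - 1/2) \<in> rect_set (a1,b1,a2,b2)" using assms(3) by blast
  from p1 p2 have "real_of_int a1 < real_of_int x1 + 1/2" "real_of_int x2 - 1/2 < real_of_int a2"
    "real_of_int b1 < real_of_int y1 + 1/2" "real_of_int y2 - 1/2 < real_of_int b2"
    unfolding rect_set_def by auto
  then have "a1 < x1 + 1" "x2 < a2 + 1" "b1 < y1 + 1" "y2 < b2 + 1" by linarith+
  then show ?thesis by linarith
qed

lemma sum_ht_le:
  fixes y1 y2 :: int
  assumes fin: "finite I" and le: "y1 \<le> y2"
    and inC: "\<forall>i\<in>I. y1 \<le> s i \<and> s i + int (h i) \<le> y2"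
    and disj: "\<forall>i\<in>I. \<forall>j\<in>I. i \<noteq> j \<longrightarrow> {s i ..< s i + int (h i)} \<inter> {s j ..< s j + int (h j)} = {}"
  shows "int (\<Sum>i\<in>I. h i) \<le> y2 - y1"
proof -
  have "card (\<Union>i\<in>I. {s i ..< s i + int (h i)}) = (\<Sum>i\<in>I. card {s i ..< s i + int (h i)})"
    using fin disj by (intro card_UN_disjoint) auto
  also have "\<dots> = (\<Sum>i\<in>I. h i)" by simp
  finally have e: "card (\<Union>i\<in>I. {s i ..< s i + int (h i)}) = (\<Sum>i\<in>I. h i)" .
  have "(\<Union>i\<in>I. {s i ..< s i + int (h i)}) \<subseteq> {y1..<y2}" using inC by auto
  then have "card (\<Union>i\<in>I. {s i ..< s i + int (h i)}) \<le> card {y1..<y2}" by (intro card_mono) auto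
  with e have "(\<Sum>i\<in>I. h i) \<le> nat (y2 - y1)" by simp
  then have "int (\<Sum>i\<in>I. h i) \<le> int (nat (y2 - y1))" by linarith
  then show ?thesis using le by simp
qed

lemma half_mem:
  fixes s k :: int
  assumes "s \<le> k" "k < s + int h"
  shows "real_of_int k + 1/2 \<in> {real_of_int s <..< real_of_int s + real h}"
proof -
  have "real_of_int s \<le> real_of_int k" "real_of_int k + 1 \<le> real_of_int s + real h"
    using assms by (simp, metis add_le_imp_le_right assms(2) of_int_1 of_int_add of_int_le_iff of_int_of_nat_eq zless_imp_add1_zle)
  then show ?thesis by simp
qed

lemma ceil_facts:
  fixes w W :: real and m :: nat
  assumes "0 < w" "w \<le> W" "m \<ge> 1"
  shows "nat \<lceil>w * m / W\<rceil> \<in> {1..m} \<and> w \<le> real (nat \<lceil>w * m / W\<rceil>) * W / m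
         \<and> (real (nat \<lceil>w * m / W\<rceil>) - 1) * W / m < w"
proof -
  define x where "x = w * m / W"
  have Wp: "W > 0" using assms by linarith
  have mp: "real m > 0" using assms by simp
  have x0: "x > 0" unfolding x_def using assms Wp mp by simp
  have xm: "x \<le> m" unfolding x_def using assms Wp mp by (simp add: field_simps)
  have c1: "\<lceil>x\<rceil> \<ge> 1" using x0 by (simp add: one_le_ceiling)
  have c2: "\<lceil>x\<rceil> \<le> int m" using xm by (simp add: ceiling_le_iff)
  have r: "real (nat \<lceil>x\<rceil>) = real_of_int \<lceil>x\<rceil>" using c1 by simp
  have l1: "x \<le> real_of_int \<lceil>x\<rceil>" by (rule le_of_int_ceiling)
  have l2: "real_of_int \<lceil>x\<rceil> - 1 < x" using ceiling_correct[of x] by linarith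
  have "w = x * W / m" unfolding x_def using Wp mp by simp
  then have "w \<le> real_of_int \<lceil>x\<rceil> * W / m" "(real_of_int \<lceil>x\<rceil> - 1) * W / m < w"
    using l1 l2 Wp mp by (simp_all add: divide_right_mono mult_right_mono divide_strict_right_mono)
  moreover have "nat \<lceil>x\<rceil> \<in> {1..m}" using c1 c2 by (simp add: le_nat_iff nat_le_iff)
  ultimately show ?thesis using r unfolding x_def[symmetric] by simp
qed

lemma rect_disj_y:
  assumes "d \<le> c'"
  shows "rect_set (a,c,b,d) \<inter> rect_set (a',c',b',d') = {}"
proof -
  have "real_of_int d \<le> real_of_int c'" using assms by simp
  then show ?thesis unfolding rect_set_def by auto
qed

lemma interval_disj:
  fixes s s' :: int
  assumes "s + int h \<le> s'"
  shows "{real_of_int s<..<real_of_int s + real h} \<inter> {real_of_int s'<..<real_of_int s' + real h'} = {}"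
proof -
  have "real_of_int s + real h \<le> real_of_int s'" using assms
    by (metis of_int_add of_int_le_iff of_int_of_nat_eq)
  then show ?thesis by auto
qed

lemma core:
  fixes m :: nat and C :: rect
  assumes m: "m \<ge> 1" and fin: "finite I" and vC: "valid_rect C"
    and pos: "\<forall>i\<in>I. wd i > 0 \<and> ht i > 0" and pk: "packed_in Horizontal C wd ht p I"
  shows "\<exists>Cs a p'. (\<forall>j\<in>{1..m}. valid_rect (Cs j) \<and> rect_set (Cs j) \<subseteq> rect_set C) \<and>
     (\<forall>j\<in>{1..m}. \<forall>j'\<in>{1..m}. j \<noteq> j' \<longrightarrow> rect_set (Cs j) \<inter> rect_set (Cs j') = {}) \<and>
     (\<forall>i\<in>I. a i \<in> {1..m}) \<and>
     (\<forall>j\<in>{1..m}. packed_in Horizontal (Cs j) wd ht p' {i\<in>I. a i = j}) \<and>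
     real_of_int (\<Sum>j\<in>{1..m}. rect_area (Cs j)) - real (\<Sum>i\<in>I. wd i * ht i)
       \<le> (1 / real m) * real_of_int (rect_area C)"
proof -
  obtain x1 y1 x2 y2 where C: "C = (x1,y1,x2,y2)" by (cases C) auto
  define W where "W = x2 - x1"
  have xy: "x1 \<le> x2" "y1 \<le> y2" using vC C unfolding valid_rect_def by auto
  have inC: "\<forall>i\<in>I. x1 \<le> fst (p i) \<and> fst (p i) + int (wd i) \<le> x2 \<and> y1 \<le> snd (p i) \<and> snd (p i) + int (ht i) \<le> y2"
  proof
    fix i assume i: "i \<in> I"
    have "rect_set (fst (p i), snd (p i), fst (p i) + int (wd i), snd (p i) + int (ht i)) \<subseteq> rect_set (x1,y1,x2,y2)"
      using pk i C unfolding packed_in_def item_rect_def by auto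
    moreover have "fst (p i) < fst (p i) + int (wd i)" "snd (p i) < snd (p i) + int (ht i)" using pos i by auto
    ultimately show "x1 \<le> fst (p i) \<and> fst (p i) + int (wd i) \<le> x2 \<and> y1 \<le> snd (p i) \<and> snd (p i) + int (ht i) \<le> y2"
      using rect_sub_inv by blast
  qed
  have disj: "\<forall>i\<in>I. \<forall>j\<in>I. i \<noteq> j \<longrightarrow> {snd (p i) ..< snd (p i) + int (ht i)} \<inter> {snd (p j) ..< snd (p j) + int (ht j)} = {}"
  proof (intro ballI impI)
    fix i j assume ij: "i \<in> I" "j \<in> I" "i \<noteq> j"
    show "{snd (p i) ..< snd (p i) + int (ht i)} \<inter> {snd (p j) ..< snd (p j) + int (ht j)} = {}"
    proof (rule ccontr)
      assume "{snd (p i) ..< snd (p i) + int (ht i)} \<inter> {snd (p j) ..< snd (p j) + int (ht j)} \<noteq> {}"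
      then obtain k where "k \<in> {snd (p i) ..< snd (p i) + int (ht i)} \<inter> {snd (p j) ..< snd (p j) + int (ht j)}" by blast
      then have k: "snd (p i) \<le> k" "k < snd (p i) + int (ht i)" "snd (p j) \<le> k" "k < snd (p j) + int (ht j)" by auto
      have "real_of_int k + 1/2 \<in> stack_proj Horizontal wd ht p i" "real_of_int k + 1/2 \<in> stack_proj Horizontal wd ht p j"
        using half_mem[OF k(1,2)] half_mem[OF k(3,4)] unfolding stack_proj_def by simp_all
      then show False using pk ij unfolding packed_in_def by blast
    qed
  qed
  have sumH: "int (\<Sum>i\<in>I. ht i) \<le> y2 - y1"
    using sum_ht_le[OF fin xy(2), of "\<lambda>i. snd (p i)" ht] inC disj by blast
  have wdW: "\<forall>i\<in>I. 0 < int (wd i) \<and> int (wd i) \<le> W" using inC pos W_def by force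
  define a where "a i = nat \<lceil>real (wd i) * real m / real_of_int W\<rceil>" for i
  have aI: "a i \<in> {1..m} \<and> real (wd i) \<le> real (a i) * real_of_int W / real m
      \<and> (real (a i) - 1) * real_of_int W / real m < real (wd i)" if "i \<in> I" for i
  proof -
    have "0 < real (wd i)" "real (wd i) \<le> real_of_int W" using wdW that by auto
    from ceil_facts[OF this m] show ?thesis unfolding a_def .
  qed
  define f where "f j = \<lfloor>real j * real_of_int W / real m\<rfloor>" for j
  define H where "H j = (\<Sum>i\<in>{i\<in>I. a i = j}. ht i)" for j
  define B where "B j = y1 + int (\<Sum>i\<in>{i\<in>I. a i < j}. ht i)" for j
  define bef where "bef i = {i'\<in>I. a i' < a i \<or> (a i' = a i \<and> i' < i)}" for i
  define Y where "Y i = y1 + int (\<Sum>i'\<in>bef i. ht i')" for i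
  define Cs where "Cs j = (x1, B j, x1 + f j, B j + int (H j))" for j
  define p' where "p' i = (x1, Y i)" for i

  have W0: "0 \<le> W" using xy W_def by simp
  have mp: "real m > 0" using m by simp
  have fW: "0 \<le> f j \<and> f j \<le> W" if "j \<le> m" for j
  proof -
    have "real j * real_of_int W / real m \<le> real_of_int W"
    proof -
      have "real j \<le> real m" using that by simp
      then have "real_of_int W * real j \<le> real_of_int W * real m" using W0 by (simp add: mult_left_mono)
      then show ?thesis using mp by (simp add: field_simps)
    qed
    moreover have "0 \<le> real j * real_of_int W / real m" using W0 by simp
    ultimately show ?thesis unfolding f_def by (simp add: floor_le_iff)
  qed
  have wf: "int (wd i) \<le> f (a i)" if "i \<in> I" for i
    using aI[OF that] unfolding f_def by (simp add: le_floor_iff)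
  have fa: "real_of_int (f (a i)) - real (wd i) \<le> real_of_int W / real m" if "i \<in> I" for i
  proof -
    have "real_of_int (f (a i)) \<le> real (a i) * real_of_int W / real m" unfolding f_def by simp
    moreover have "(real (a i) - 1) * real_of_int W / real m < real (wd i)" using aI[OF that] by blast
    moreover have "real (a i) * real_of_int W / real m - (real (a i) - 1) * real_of_int W / real m = real_of_int W / real m"
      using mp by (simp add: field_simps)
    ultimately show ?thesis by linarith
  qed
  have BH: "B j + int (H j) = y1 + int (\<Sum>i\<in>{i\<in>I. a i \<le> j}. ht i)" for j
  proof -
    have "{i\<in>I. a i \<le> j} = {i\<in>I. a i < j} \<union> {i\<in>I. a i = j}" by auto
    moreover have "{i\<in>I. a i < j} \<inter> {i\<in>I. a i = j} = {}" by auto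
    ultimately have "(\<Sum>i\<in>{i\<in>I. a i \<le> j}. ht i) = (\<Sum>i\<in>{i\<in>I. a i < j}. ht i) + (\<Sum>i\<in>{i\<in>I. a i = j}. ht i)"
      using fin by (simp add: sum.union_disjoint)
    then show ?thesis unfolding B_def H_def by simp
  qed
  have Btop: "B j + int (H j) \<le> y2" for j
  proof -
    have "(\<Sum>i\<in>{i\<in>I. a i \<le> j}. ht i) \<le> (\<Sum>i\<in>I. ht i)" using fin by (intro sum_mono2) auto
    then show ?thesis using BH[of j] sumH by linarith
  qed
  have Bbot: "y1 \<le> B j" for j unfolding B_def by (simp add: sum_nonneg)
  have Bmono: "B j + int (H j) \<le> B j'" if "j < j'" for j j'
  proof -
    have "(\<Sum>i\<in>{i\<in>I. a i \<le> j}. ht i) \<le> (\<Sum>i\<in>{i\<in>I. a i < j'}. ht i)" using fin that by (intro sum_mono2) auto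
    then show ?thesis using BH[of j] unfolding B_def by linarith
  qed
  have YB: "B (a i) \<le> Y i" if "i \<in> I" for i
  proof -
    have "(\<Sum>i\<in>{i'\<in>I. a i' < a i}. ht i) \<le> (\<Sum>i'\<in>bef i. ht i')" using fin unfolding bef_def by (intro sum_mono2) auto
    then show ?thesis unfolding B_def Y_def by linarith
  qed
  have Yins: "Y i + int (ht i) = y1 + int (\<Sum>i'\<in>insert i (bef i). ht i')" for i
  proof -
    have "i \<notin> bef i" "finite (bef i)" using fin unfolding bef_def by auto
    then show ?thesis unfolding Y_def by simp
  qed
  have YH: "Y i + int (ht i) \<le> B (a i) + int (H (a i))" if "i \<in> I" for i
  proof -
    have "(\<Sum>i'\<in>insert i (bef i). ht i') \<le> (\<Sum>i'\<in>{i'\<in>I. a i' \<le> a i}. ht i')" using fin that unfolding bef_def by (intro sum_mono2) auto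
    then show ?thesis using Yins[of i] BH[of "a i"] by linarith
  qed
  have Yord: "Y i + int (ht i) \<le> Y i'" if "i \<in> I" "i' \<in> I" "a i < a i' \<or> (a i = a i' \<and> i < i')" for i i'
  proof -
    have "(\<Sum>i'\<in>insert i (bef i). ht i') \<le> (\<Sum>i''\<in>bef i'. ht i'')" using fin that unfolding bef_def by (intro sum_mono2) auto
    then show ?thesis using Yins[of i] unfolding Y_def by linarith
  qed
  have Ydisj: "stack_proj Horizontal wd ht p' i \<inter> stack_proj Horizontal wd ht p' i' = {}"
    if "i \<in> I" "i' \<in> I" "i \<noteq> i'" for i i'
  proof -
    have sp: "stack_proj Horizontal wd ht p' x = {real_of_int (Y x)<..<real_of_int (Y x) + real (ht x)}" for x
      unfolding stack_proj_def p'_def by simp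
    have "(a i < a i' \<or> (a i = a i' \<and> i < i')) \<or> (a i' < a i \<or> (a i' = a i \<and> i' < i))" using that(3) by linarith
    then show ?thesis
    proof
      assume "a i < a i' \<or> (a i = a i' \<and> i < i')"
      then have "Y i + int (ht i) \<le> Y i'" using Yord that by blast
      then show ?thesis unfolding sp by (rule interval_disj)
    next
      assume "a i' < a i \<or> (a i' = a i \<and> i' < i)"
      then have "Y i' + int (ht i') \<le> Y i" using Yord that by blast
      then have "stack_proj Horizontal wd ht p' i' \<inter> stack_proj Horizontal wd ht p' i = {}" unfolding sp by (rule interval_disj)
      then show ?thesis by blast
    qed
  qed
  have area_eq: "(\<Sum>j\<in>{1..m}. rect_area (Cs j)) = (\<Sum>i\<in>I. f (a i) * int (ht i))"
  proof -
    have "(\<Sum>j\<in>{1..m}. rect_area (Cs j)) = (\<Sum>j\<in>{1..m}. \<Sum>i\<in>{i\<in>I. a i = j}. f (a i) * int (ht i))"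
    proof (rule sum.cong[OF refl])
      fix j
      have "rect_area (Cs j) = f j * int (H j)" unfolding rect_area_def rect_w_def rect_h_def Cs_def by simp
      also have "\<dots> = (\<Sum>i\<in>{i\<in>I. a i = j}. f j * int (ht i))" unfolding H_def by (simp add: sum_distrib_left)
      also have "\<dots> = (\<Sum>i\<in>{i\<in>I. a i = j}. f (a i) * int (ht i))" by (rule sum.cong) auto
      finally show "rect_area (Cs j) = (\<Sum>i\<in>{i\<in>I. a i = j}. f (a i) * int (ht i))" .
    qed
    also have "\<dots> = (\<Sum>i\<in>I. f (a i) * int (ht i))"
      using aI by (intro sum.group[OF fin]) auto
    finally show ?thesis .
  qed
  have area: "real_of_int (\<Sum>j\<in>{1..m}. rect_area (Cs j)) - real (\<Sum>i\<in>I. wd i * ht i)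
       \<le> (1 / real m) * real_of_int (rect_area C)"
  proof -
    have "real_of_int (\<Sum>j\<in>{1..m}. rect_area (Cs j)) - real (\<Sum>i\<in>I. wd i * ht i)
        = (\<Sum>i\<in>I. (real_of_int (f (a i)) - real (wd i)) * real (ht i))"
      unfolding area_eq by (simp add: sum_subtractf left_diff_distrib)
    also have "\<dots> \<le> (\<Sum>i\<in>I. (real_of_int W / real m) * real (ht i))"
      using fa by (intro sum_mono mult_right_mono) auto
    also have "\<dots> = (real_of_int W / real m) * real (\<Sum>i\<in>I. ht i)" by (simp add: sum_distrib_left)
    also have "\<dots> \<le> (real_of_int W / real m) * real_of_int (y2 - y1)"
    proof (rule mult_left_mono)
      show "real (\<Sum>i\<in>I. ht i) \<le> real_of_int (y2 - y1)" using sumH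
        by (metis of_int_le_iff of_int_of_nat_eq)
      show "0 \<le> real_of_int W / real m" using W0 by simp
    qed
    also have "\<dots> = (1 / real m) * real_of_int (rect_area C)"
      unfolding C rect_area_def rect_w_def rect_h_def W_def by simp
    finally show ?thesis .
  qed
  show ?thesis
  proof (intro exI conjI)
    show "\<forall>j\<in>{1..m}. valid_rect (Cs j) \<and> rect_set (Cs j) \<subseteq> rect_set C"
    proof
      fix j assume j: "j \<in> {1..m}"
      have "valid_rect (Cs j)" using fW[of j] j unfolding valid_rect_def Cs_def by simp
      moreover have "rect_set (Cs j) \<subseteq> rect_set C"
        unfolding Cs_def C using fW[of j] j Bbot[of j] Btop[of j] W_def by (intro rect_sub) auto
      ultimately show "valid_rect (Cs j) \<and> rect_set (Cs j) \<subseteq> rect_set C" ..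
    qed
    show "\<forall>j\<in>{1..m}. \<forall>j'\<in>{1..m}. j \<noteq> j' \<longrightarrow> rect_set (Cs j) \<inter> rect_set (Cs j') = {}"
    proof (intro ballI impI)
      fix j j' :: nat assume "j \<noteq> j'"
      then have "j < j' \<or> j' < j" by linarith
      then show "rect_set (Cs j) \<inter> rect_set (Cs j') = {}"
      proof
        assume "j < j'" then show ?thesis unfolding Cs_def using Bmono by (intro rect_disj_y) auto
      next
        assume "j' < j" then have "rect_set (Cs j') \<inter> rect_set (Cs j) = {}"
          unfolding Cs_def using Bmono by (intro rect_disj_y) auto
        then show ?thesis by blast
      qed
    qed
    show "\<forall>i\<in>I. a i \<in> {1..m}" using aI by blast
    show "\<forall>j\<in>{1..m}. packed_in Horizontal (Cs j) wd ht p' {i\<in>I. a i = j}"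
    proof
      fix j assume j: "j \<in> {1..m}"
      show "packed_in Horizontal (Cs j) wd ht p' {i\<in>I. a i = j}"
        unfolding packed_in_def
      proof (intro conjI ballI impI)
        fix i assume i: "i \<in> {i\<in>I. a i = j}"
        then have iI: "i \<in> I" and ai: "a i = j" by auto
        show "rect_set (item_rect wd ht p' i) \<subseteq> rect_set (Cs j)"
          unfolding item_rect_def p'_def Cs_def using wf[OF iI] YB[OF iI] YH[OF iI] ai
          by (intro rect_sub) auto
      next
        fix i i' assume "i \<in> {i\<in>I. a i = j}" "i' \<in> {i\<in>I. a i = j}" "i \<noteq> i'"
        then show "stack_proj Horizontal wd ht p' i \<inter> stack_proj Horizontal wd ht p' i' = {}"
          using Ydisj by auto
      qed
    qed
    show "real_of_int (\<Sum>j\<in>{1..m}. rect_area (Cs j)) - real (\<Sum>i\<in>I. wd i * ht i)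
       \<le> (1 / real m) * real_of_int (rect_area C)" by (rule area)
  qed
qed

definition tr :: "rect \<Rightarrow> rect" where
  "tr r = (case r of (x1, y1, x2, y2) \<Rightarrow> (y1, x1, y2, x2))"

lemma rect_set_tr: "rect_set (tr r) = prod.swap ` rect_set r"
  by (cases r) (auto simp: tr_def rect_set_def image_iff)

lemma tr_tr[simp]: "tr (tr r) = r" by (cases r) (simp add: tr_def)
lemma valid_tr[simp]: "valid_rect (tr r) = valid_rect r" by (cases r) (auto simp: tr_def valid_rect_def)
lemma area_tr[simp]: "rect_area (tr r) = rect_area r"
  by (cases r) (simp add: tr_def rect_area_def rect_w_def rect_h_def)

lemma sub_tr: "rect_set (tr r) \<subseteq> rect_set (tr s) \<longleftrightarrow> rect_set r \<subseteq> rect_set s"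
  unfolding rect_set_tr by (simp add: inj_image_subset_iff)

lemma disj_tr: "rect_set (tr r) \<inter> rect_set (tr s) = {} \<longleftrightarrow> rect_set r \<inter> rect_set s = {}"
  unfolding rect_set_tr by (metis image_Int image_is_empty inj_swap)

lemma packed_V:
  "packed_in Vertical C wd ht p I = packed_in Horizontal (tr C) ht wd (prod.swap \<circ> p) I"
proof -
  have ir: "item_rect ht wd (prod.swap \<circ> p) i = tr (item_rect wd ht p i)" for i
    by (simp add: item_rect_def tr_def prod.swap_def)
  have sp: "stack_proj Horizontal ht wd (prod.swap \<circ> p) i = stack_proj Vertical wd ht p i" for i
    by (simp add: stack_proj_def)
  have "rect_set (item_rect wd ht p i) \<subseteq> rect_set C \<longleftrightarrow> rect_set (tr (item_rect wd ht p i)) \<subseteq> rect_set (tr C)" for i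
    using sub_tr by blast
  then show ?thesis unfolding packed_in_def ir sp by simp
qed

theorem mainTheorem13:
  shows "\<exists>g :: real \<Rightarrow> real \<Rightarrow> nat. \<forall>(\<delta>::real) (\<epsilon>::real).
    \<delta> > 0 \<longrightarrow> 1 / \<delta> \<in> \<nat> \<longrightarrow> \<epsilon> > 0 \<longrightarrow>
    (\<forall>(k::ckind) (N::nat) (C::rect) (wd::nat \<Rightarrow> nat) (ht::nat \<Rightarrow> nat) (p::nat \<Rightarrow> int \<times> int) (I::nat set).
       finite I \<and> valid_rect C \<and> rect_set C \<subseteq> knapsack N \<and>
       (\<forall>i\<in>I. wd i > 0 \<and> ht i > 0) \<and>
       packed_in k C wd ht p I \<and>
       (\<forall>i\<in>I. real (long_side k wd ht i) > \<epsilon> * real N)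
     \<longrightarrow>
       (\<exists>(I'::nat set) (Cs::nat \<Rightarrow> rect) (a::nat \<Rightarrow> nat) (p'::nat \<Rightarrow> int \<times> int).
          I' \<subseteq> I \<and> card I' + g \<delta> \<epsilon> \<ge> card I \<and>
          (\<forall>j\<in>{1..nat \<lfloor>1 / \<delta>\<rfloor>}. valid_rect (Cs j) \<and> rect_set (Cs j) \<subseteq> rect_set C) \<and>
          (\<forall>j\<in>{1..nat \<lfloor>1 / \<delta>\<rfloor>}. \<forall>j'\<in>{1..nat \<lfloor>1 / \<delta>\<rfloor>}. j \<noteq> j' \<longrightarrow>
              rect_set (Cs j) \<inter> rect_set (Cs j') = {}) \<and>
          (\<forall>i\<in>I'. a i \<in> {1..nat \<lfloor>1 / \<delta>\<rfloor>}) \<and>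
          (\<forall>j\<in>{1..nat \<lfloor>1 / \<delta>\<rfloor>}. packed_in k (Cs j) wd ht p' {i\<in>I'. a i = j}) \<and>
          real_of_int (\<Sum>j\<in>{1..nat \<lfloor>1 / \<delta>\<rfloor>}. rect_area (Cs j)) - real (\<Sum>i\<in>I'. wd i * ht i)
            \<le> \<delta> * real_of_int (rect_area C)))"
proof (intro exI[of _ "\<lambda>_ _. 0"] allI impI, elim conjE)
  fix \<delta> \<epsilon> :: real and k N C wd ht p I
  assume dpos: "\<delta> > 0" and dN: "1 / \<delta> \<in> \<nat>" and fin: "finite I" and vC: "valid_rect C"
    and pos: "\<forall>i\<in>I. wd i > 0 \<and> ht i > 0" and pk: "packed_in k C wd ht p I"
  obtain n where n: "1 / \<delta> = real n" using dN Nats_cases by blast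
  have n1: "n \<ge> 1" using n dpos by (metis less_one not_less divide_pos_pos of_nat_0 of_nat_less_iff zero_less_one order_less_irrefl)
  have nn: "nat \<lfloor>1 / \<delta>\<rfloor> = n" using n by simp
  have dd: "\<delta> = 1 / real n" using n dpos by (metis divide_divide_eq_right div_by_1 mult_1 nonzero_mult_div_cancel_left order_less_irrefl)
  show "\<exists>I' Cs a p'. I' \<subseteq> I \<and> card I' + (\<lambda>_ _. 0) \<delta> \<epsilon> \<ge> card I \<and>
          (\<forall>j\<in>{1..nat \<lfloor>1 / \<delta>\<rfloor>}. valid_rect (Cs j) \<and> rect_set (Cs j) \<subseteq> rect_set C) \<and>
          (\<forall>j\<in>{1..nat \<lfloor>1 / \<delta>\<rfloor>}. \<forall>j'\<in>{1..nat \<lfloor>1 / \<delta>\<rfloor>}. j \<noteq> j' \<longrightarrow>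
              rect_set (Cs j) \<inter> rect_set (Cs j') = {}) \<and>
          (\<forall>i\<in>I'. a i \<in> {1..nat \<lfloor>1 / \<delta>\<rfloor>}) \<and>
          (\<forall>j\<in>{1..nat \<lfloor>1 / \<delta>\<rfloor>}. packed_in k (Cs j) wd ht p' {i\<in>I'. a i = j}) \<and>
          real_of_int (\<Sum>j\<in>{1..nat \<lfloor>1 / \<delta>\<rfloor>}. rect_area (Cs j)) - real (\<Sum>i\<in>I'. wd i * ht i)
            \<le> \<delta> * real_of_int (rect_area C)"
  proof (cases k)
    case Horizontal
    obtain Cs a p' where R: "(\<forall>j\<in>{1..n}. valid_rect (Cs j) \<and> rect_set (Cs j) \<subseteq> rect_set C) \<and>
     (\<forall>j\<in>{1..n}. \<forall>j'\<in>{1..n}. j \<noteq> j' \<longrightarrow> rect_set (Cs j) \<inter> rect_set (Cs j') = {}) \<and>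
     (\<forall>i\<in>I. a i \<in> {1..n}) \<and>
     (\<forall>j\<in>{1..n}. packed_in Horizontal (Cs j) wd ht p' {i\<in>I. a i = j}) \<and>
     real_of_int (\<Sum>j\<in>{1..n}. rect_area (Cs j)) - real (\<Sum>i\<in>I. wd i * ht i)
       \<le> (1 / real n) * real_of_int (rect_area C)"
      using core[OF n1 fin vC pos] pk Horizontal by blast
    show ?thesis
      by (rule exI[of _ I], rule exI[of _ Cs], rule exI[of _ a], rule exI[of _ p']) (use R Horizontal dd nn in auto)
  next
    case Vertical
    have pk': "packed_in Horizontal (tr C) ht wd (prod.swap \<circ> p) I" using pk Vertical packed_V by simp
    have pos': "\<forall>i\<in>I. ht i > 0 \<and> wd i > 0" using pos by auto
    have vC': "valid_rect (tr C)" using vC by simp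
    obtain Cs a p' where R: "(\<forall>j\<in>{1..n}. valid_rect (Cs j) \<and> rect_set (Cs j) \<subseteq> rect_set (tr C)) \<and>
     (\<forall>j\<in>{1..n}. \<forall>j'\<in>{1..n}. j \<noteq> j' \<longrightarrow> rect_set (Cs j) \<inter> rect_set (Cs j') = {}) \<and>
     (\<forall>i\<in>I. a i \<in> {1..n}) \<and>
     (\<forall>j\<in>{1..n}. packed_in Horizontal (Cs j) ht wd p' {i\<in>I. a i = j}) \<and>
     real_of_int (\<Sum>j\<in>{1..n}. rect_area (Cs j)) - real (\<Sum>i\<in>I. ht i * wd i)
       \<le> (1 / real n) * real_of_int (rect_area (tr C))"
      using core[OF n1 fin vC' pos' pk'] by blast
    have P: "packed_in Vertical (tr (Cs j)) wd ht (prod.swap \<circ> p') X \<longleftrightarrow> packed_in Horizontal (Cs j) ht wd p' X" for j X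
    proof -
      have "prod.swap \<circ> (prod.swap \<circ> p') = p'" by (simp add: fun_eq_iff)
      then show ?thesis unfolding packed_V by simp
    qed
    have S: "rect_set (tr (Cs j)) \<subseteq> rect_set C \<longleftrightarrow> rect_set (Cs j) \<subseteq> rect_set (tr C)" for j
      using sub_tr[of "Cs j" "tr C"] by simp
    have D: "rect_set (tr (Cs j)) \<inter> rect_set (tr (Cs j')) = {} \<longleftrightarrow> rect_set (Cs j) \<inter> rect_set (Cs j') = {}" for j j'
      by (rule disj_tr)
    have M: "(\<Sum>i\<in>I. ht i * wd i) = (\<Sum>i\<in>I. wd i * ht i)" by (simp add: mult.commute)
    show ?thesis
      by (rule exI[of _ I], rule exI[of _ "tr \<circ> Cs"], rule exI[of _ a], rule exI[of _ "prod.swap \<circ> p'"])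
        (use R Vertical dd nn P S D M in auto)
  qed
qed

end
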